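(* Let $\rho:\mathbb{Z}\to[0,\infty)$ be a weight with finite moments, $f,g$ polynomials with $\deg f\le2$, $\deg g\le1$, $f(x+1)\rho(x+1)-f(x)\rho(x)=g(x)\rho(x)$ on $\mathbb{Z}$, and $\rho f$ vanishing at the end points of the support of $\rho$. Let $\{p_n\}$ be the monic orthogonal polynomials for $\rho$ with $\sum_xp_mp_n\rho=h_n\delta_{nm}$, $h_n>0$; let $\mathcal{A}_{\rm l}=g(x)T+f(x)(\Delta+\nabla)$, $c_n:=-\sum_xp_{n+1}(x)(\mathcal{A}_{\rm l}p_n)(x)\rho(x)$, $\omega(x)=f(x+1)\rho(x+1)$, and assume the Pfaffians $\mathrm{Pf}[\sum_x(x^i(x+1)^j-(x+1)^ix^j)\omega(x)]_{i,j=0}^{2n-1}$ are nonzero for all $n\ge1$. Let $Q_{2n+1}=p_{2n+1}$, $Q_{2n}=\sum_{l=0}^n\big(\prod_{j=l}^{n-1}c_{2j+1}/c_{2j}\big)p_{2l}$, $u_n=c_{2n}$, and for $N\ge1$ $$S_N(x,y)=\sum_{i=0}^{N-1}\frac{1}{u_i}\big(Q_{2i}(x)Q_{2i+1}(y)-Q_{2i}(y)Q_{2i+1}(x)\big).$$ Then, with $t_{2N,2N-2}:=-c_{2N-1}/c_{2N-2}$, $$\sum_{m=0}^{N-1}\frac{p_{2m}(x)p_{2m}(y)}{h_{2m}}+\sum_{m=0}^{N-1}\frac{p_{2m+1}(x)p_{2m+1}(y)}{h_{2m+1}}=\mathcal{A}^{(y)}_{\rm l}S_N(x,y)-\frac{t_{2N,2N-2}}{h_{2N}}p_{2N}(y)Q_{2N-2}(x),$$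 where $\mathcal{A}^{(y)}_{\rm l}$ denotes $\mathcal{A}_{\rm l}$ acting in the variable $y$.
   Context: $T\phi(x)=\phi(x+1)$, $\Delta\phi(x)=\phi(x+1)-\phi(x)$, $\nabla\phi(x)=\phi(x)-\phi(x-1)$. *)

theory Defs
  imports "HOL-Analysis.Analysis" "HOL-Computational_Algebra.Polynomial"
    "HOL-Combinatorics.Permutations"
begin

definition Al :: "real poly \<Rightarrow> real poly \<Rightarrow> (real \<Rightarrow> real) \<Rightarrow> real \<Rightarrow> real" where
  "Al f g \<phi> x = poly g x * \<phi> (x + 1)
      + poly f x * ((\<phi> (x + 1) - \<phi> x) + (\<phi> x - \<phi> (x - 1)))"

definition finite_moments :: "(int \<Rightarrow> real) \<Rightarrow> bool" where
  "finite_moments \<rho> \<longleftrightarrow> (\<forall>k::nat. (\<lambda>x::int. \<bar>real_of_int x\<bar> ^ k * \<rho> x) summable_on UNIV)"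

definition vanishes_at_endpoints :: "(int \<Rightarrow> real) \<Rightarrow> real poly \<Rightarrow> bool" where
  "vanishes_at_endpoints \<rho> f \<longleftrightarrow>
     (let S = {x. \<rho> x \<noteq> 0}; F = (\<lambda>x::int. poly f (real_of_int x) * \<rho> x) in
       (S \<noteq> {} \<and> bdd_above S \<longrightarrow> F (Sup S) = 0) \<and>
       (S \<noteq> {} \<and> bdd_below S \<longrightarrow> F (Inf S) = 0) \<and>
       (\<not> bdd_above S \<longrightarrow> (F \<longlongrightarrow> 0) at_top) \<and>
       (\<not> bdd_below S \<longrightarrow> (F \<longlongrightarrow> 0) at_bot))"

definition pfaffian :: "nat \<Rightarrow> (nat \<Rightarrow> nat \<Rightarrow> real) \<Rightarrow> real" where
  "pfaffian n A = (\<Sum>\<sigma> | \<sigma> permutes {0..<2*n}.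
       of_int (sign \<sigma>) * (\<Prod>i<n. A (\<sigma> (2*i)) (\<sigma> (2*i+1)))) / (2 ^ n * fact n)"

definition cc :: "real poly \<Rightarrow> real poly \<Rightarrow> (int \<Rightarrow> real) \<Rightarrow> (nat \<Rightarrow> real poly) \<Rightarrow> nat \<Rightarrow> real" where
  "cc f g \<rho> p n = - (\<Sum>\<^sub>\<infinity>x::int. poly (p (n+1)) (real_of_int x)
                         * Al f g (poly (p n)) (real_of_int x) * \<rho> x)"

definition QQ :: "real poly \<Rightarrow> real poly \<Rightarrow> (int \<Rightarrow> real) \<Rightarrow> (nat \<Rightarrow> real poly) \<Rightarrow> nat \<Rightarrow> real poly" where
  "QQ f g \<rho> p k = (if odd k then p k
      else (let n = k div 2 in
            \<Sum>l = 0..n. smult (\<Prod>j = l..<n. cc f g \<rho> p (2*j+1) / cc f g \<rho> p (2*j)) (p (2*l))))"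

definition SS :: "real poly \<Rightarrow> real poly \<Rightarrow> (int \<Rightarrow> real) \<Rightarrow> (nat \<Rightarrow> real poly) \<Rightarrow> nat \<Rightarrow> real \<Rightarrow> real \<Rightarrow> real" where
  "SS f g \<rho> p N x y = (\<Sum>i<N. (1 / cc f g \<rho> p (2*i)) *
      (poly (QQ f g \<rho> p (2*i)) x * poly (QQ f g \<rho> p (2*i+1)) y
       - poly (QQ f g \<rho> p (2*i)) y * poly (QQ f g \<rho> p (2*i+1)) x))"

end

theory Submission
  imports Defs
begin

definition Fp :: "('a \<Rightarrow> 'a \<Rightarrow> real) \<Rightarrow> nat \<Rightarrow> (nat \<Rightarrow> 'a) \<Rightarrow> real" where
  "Fp Bf n v = (\<Sum>\<sigma> | \<sigma> permutes {0..<2*n}.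
       of_int (sign \<sigma>) * (\<Prod>i<n. Bf (v (\<sigma> (2*i))) (v (\<sigma> (2*i+1)))))"

lemma Fp_alt:
  assumes ab: "a < 2*n" "b < 2*n" "a \<noteq> b" and vab: "v a = v b"
  shows "Fp Bf n v = 0"
proof -
  let ?S = "{\<sigma>. \<sigma> permutes {0..<2*n}}"
  let ?F = "\<lambda>\<sigma>. of_int (sign \<sigma>) * (\<Prod>i<n. Bf (v (\<sigma> (2*i))) (v (\<sigma> (2*i+1))))"
  define \<tau> where "\<tau> = Transposition.transpose a b"
  have tp: "\<tau> permutes {0..<2*n}" unfolding \<tau>_def using ab by (intro permutes_swap_id) auto
  have vt: "\<And>x. v (\<tau> x) = v x" unfolding \<tau>_def using vab by (simp add: Transposition.transpose_def)
  have st: "sign \<tau> = -1" unfolding \<tau>_def using ab by (simp add: sign_swap_id)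
  have "sum ?F ?S = sum (\<lambda>\<sigma>. ?F (\<tau> \<circ> \<sigma>)) ?S"
    by (rule setum_permutations_compose_left[OF tp])
  also have "\<dots> = sum (\<lambda>\<sigma>. - ?F \<sigma>) ?S"
  proof (rule sum.cong)
    fix \<sigma> assume "\<sigma> \<in> ?S"
    then have sp: "\<sigma> permutes {0..<2*n}" by simp
    have "sign (\<tau> \<circ> \<sigma>) = sign \<tau> * sign \<sigma>"
      by (rule sign_compose) (use permutes_imp_permutation tp sp in auto)
    then show "?F (\<tau> \<circ> \<sigma>) = - ?F \<sigma>" by (simp add: st vt)
  qed simp
  finally have "sum ?F ?S = - sum ?F ?S" by (simp add: sum_negf)
  then show ?thesis unfolding Fp_def by simp
qed

lemma prod_slot:
  fixes n k :: nat
  assumes sp: "\<sigma> permutes {0..<2*n}" and k: "k < 2*n"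
  shows "\<exists>R j. j < 2*n \<and> j \<noteq> k \<and>
     ((\<forall>u. (\<Prod>i<n. Bf ((v(k:=u)) (\<sigma> (2*i))) ((v(k:=u)) (\<sigma> (2*i+1)))) = R * Bf u (v j)) \<or>
      (\<forall>u. (\<Prod>i<n. Bf ((v(k:=u)) (\<sigma> (2*i))) ((v(k:=u)) (\<sigma> (2*i+1)))) = R * Bf (v j) u))"
proof -
  define m where "m = inv \<sigma> k"
  have sm: "\<sigma> m = k" unfolding m_def using permutes_inverses(1)[OF sp] by simp
  have m2: "m < 2*n" unfolding m_def using permutes_in_image[OF permutes_inv[OF sp]] k by simp
  define i0 where "i0 = m div 2"
  have i0: "i0 < n" unfolding i0_def using m2 by simp
  have inj: "inj \<sigma>" using permutes_inj[OF sp] .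
  define R where "R = (\<Prod>i\<in>{..<n}-{i0}. Bf (v (\<sigma> (2*i))) (v (\<sigma> (2*i+1))))"
  have split: "(\<Prod>i<n. Bf ((v(k:=u)) (\<sigma> (2*i))) ((v(k:=u)) (\<sigma> (2*i+1))))
      = Bf ((v(k:=u)) (\<sigma> (2*i0))) ((v(k:=u)) (\<sigma> (2*i0+1))) * R" for u
  proof -
    have "(\<Prod>i<n. Bf ((v(k:=u)) (\<sigma> (2*i))) ((v(k:=u)) (\<sigma> (2*i+1))))
       = Bf ((v(k:=u)) (\<sigma> (2*i0))) ((v(k:=u)) (\<sigma> (2*i0+1))) *
         (\<Prod>i\<in>{..<n}-{i0}. Bf ((v(k:=u)) (\<sigma> (2*i))) ((v(k:=u)) (\<sigma> (2*i+1))))"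
      using i0 by (subst prod.remove[of _ i0]) auto
    also have "(\<Prod>i\<in>{..<n}-{i0}. Bf ((v(k:=u)) (\<sigma> (2*i))) ((v(k:=u)) (\<sigma> (2*i+1)))) = R"
      unfolding R_def
    proof (rule prod.cong)
      fix i assume i: "i \<in> {..<n}-{i0}"
      have "2*i \<noteq> m" "2*i+1 \<noteq> m" using i unfolding i0_def by auto
      then have "\<sigma> (2*i) \<noteq> k" "\<sigma> (2*i+1) \<noteq> k" using inj sm by (metis injD)+
      then show "Bf ((v(k:=u)) (\<sigma> (2*i))) ((v(k:=u)) (\<sigma> (2*i+1))) = Bf (v (\<sigma> (2*i))) (v (\<sigma> (2*i+1)))"
        by simp
    qed simp
    finally show ?thesis .
  qed
  show ?thesis
  proof (cases "even m")
    case True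
    then have m0: "m = 2*i0" unfolding i0_def by simp
    define j where "j = \<sigma> (2*i0+1)"
    have jk: "j \<noteq> k" unfolding j_def using inj sm m0 by (metis injD n_not_Suc_n Suc_eq_plus1)
    have j2: "j < 2*n" unfolding j_def using permutes_in_image[OF sp, of "2*i0+1"] i0 by simp
    have "\<forall>u. (\<Prod>i<n. Bf ((v(k:=u)) (\<sigma> (2*i))) ((v(k:=u)) (\<sigma> (2*i+1)))) = R * Bf u (v j)"
      using split sm m0 jk unfolding j_def by (simp add: mult.commute)
    then show ?thesis using jk j2 by blast
  next
    case False
    then have m0: "m = 2*i0+1" unfolding i0_def by presburger
    define j where "j = \<sigma> (2*i0)"
    have jk: "j \<noteq> k" unfolding j_def using inj sm m0 by (metis injD n_not_Suc_n Suc_eq_plus1)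
    have j2: "j < 2*n" unfolding j_def using permutes_in_image[OF sp, of "2*i0"] i0 by simp
    have "\<forall>u. (\<Prod>i<n. Bf ((v(k:=u)) (\<sigma> (2*i))) ((v(k:=u)) (\<sigma> (2*i+1)))) = R * Bf (v j) u"
      using split sm m0 jk unfolding j_def by (simp add: mult.commute)
    then show ?thesis using jk j2 by blast
  qed
qed

lemma Fp_zero_slot:
  fixes n k :: nat
  assumes k: "k < 2*n" and z: "\<And>j. j < 2*n \<Longrightarrow> j \<noteq> k \<Longrightarrow> Bf q (v j) = 0 \<and> Bf (v j) q = 0"
  shows "Fp Bf n (v(k:=q)) = 0"
  unfolding Fp_def
proof (rule sum.neutral, rule ballI)
  fix \<sigma> assume "\<sigma> \<in> {\<sigma>. \<sigma> permutes {0..<2*n}}"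
  then have sp: "\<sigma> permutes {0..<2*n}" by simp
  obtain R j where j: "j < 2*n" "j \<noteq> k" and
    h: "(\<forall>u. (\<Prod>i<n. Bf ((v(k:=u)) (\<sigma> (2*i))) ((v(k:=u)) (\<sigma> (2*i+1)))) = R * Bf u (v j)) \<or>
      (\<forall>u. (\<Prod>i<n. Bf ((v(k:=u)) (\<sigma> (2*i))) ((v(k:=u)) (\<sigma> (2*i+1)))) = R * Bf (v j) u)"
    using prod_slot[OF sp k, of Bf v] by blast
  have "(\<Prod>i<n. Bf ((v(k:=q)) (\<sigma> (2*i))) ((v(k:=q)) (\<sigma> (2*i+1)))) = R * Bf q (v j) \<or>
        (\<Prod>i<n. Bf ((v(k:=q)) (\<sigma> (2*i))) ((v(k:=q)) (\<sigma> (2*i+1)))) = R * Bf (v j) q"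
    using h by blast
  then have "(\<Prod>i<n. Bf ((v(k:=q)) (\<sigma> (2*i))) ((v(k:=q)) (\<sigma> (2*i+1)))) = 0"
    using z[OF j] by (metis mult_zero_right)
  then show "of_int (sign \<sigma>) * (\<Prod>i<n. Bf ((v(k:=q)) (\<sigma> (2*i))) ((v(k:=q)) (\<sigma> (2*i+1)))) = 0"
    by simp
qed

lemma Fp_slot_lin:
  fixes Bf :: "real poly \<Rightarrow> real poly \<Rightarrow> real" and n k :: nat
  assumes k: "k < 2*n" and J: "finite J"
    and BL: "\<And>z. Bf (\<Sum>j\<in>J. smult (a j) (w j)) z = (\<Sum>j\<in>J. a j * Bf (w j) z)"
    and BR: "\<And>z. Bf z (\<Sum>j\<in>J. smult (a j) (w j)) = (\<Sum>j\<in>J. a j * Bf z (w j))"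
  shows "Fp Bf n (v(k := (\<Sum>j\<in>J. smult (a j) (w j)))) = (\<Sum>j\<in>J. a j * Fp Bf n (v(k := w j)))"
proof -
  let ?u = "\<Sum>j\<in>J. smult (a j) (w j)"
  have per: "(\<Prod>i<n. Bf ((v(k:=?u)) (\<sigma> (2*i))) ((v(k:=?u)) (\<sigma> (2*i+1))))
     = (\<Sum>j\<in>J. a j * (\<Prod>i<n. Bf ((v(k:=w j)) (\<sigma> (2*i))) ((v(k:=w j)) (\<sigma> (2*i+1)))))"
    if sp: "\<sigma> permutes {0..<2*n}" for \<sigma>
  proof -
    obtain R j0 where
      h: "(\<forall>u. (\<Prod>i<n. Bf ((v(k:=u)) (\<sigma> (2*i))) ((v(k:=u)) (\<sigma> (2*i+1)))) = R * Bf u (v j0)) \<or>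
      (\<forall>u. (\<Prod>i<n. Bf ((v(k:=u)) (\<sigma> (2*i))) ((v(k:=u)) (\<sigma> (2*i+1)))) = R * Bf (v j0) u)"
      using prod_slot[OF sp k, of Bf v] by blast
    then show ?thesis
    proof
      assume a: "\<forall>u. (\<Prod>i<n. Bf ((v(k:=u)) (\<sigma> (2*i))) ((v(k:=u)) (\<sigma> (2*i+1)))) = R * Bf u (v j0)"
      show ?thesis by (simp only: a BL sum_distrib_left) (simp add: mult_ac)
    next
      assume a: "\<forall>u. (\<Prod>i<n. Bf ((v(k:=u)) (\<sigma> (2*i))) ((v(k:=u)) (\<sigma> (2*i+1)))) = R * Bf (v j0) u"
      show ?thesis by (simp only: a BR sum_distrib_left) (simp add: mult_ac)
    qed
  qed
  have "Fp Bf n (v(k := ?u)) = (\<Sum>\<sigma> | \<sigma> permutes {0..<2*n}. \<Sum>j\<in>J.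
        a j * (of_int (sign \<sigma>) * (\<Prod>i<n. Bf ((v(k:=w j)) (\<sigma> (2*i))) ((v(k:=w j)) (\<sigma> (2*i+1))))))"
    unfolding Fp_def
  proof (rule sum.cong[OF refl])
    fix \<sigma> assume "\<sigma> \<in> {\<sigma>. \<sigma> permutes {0..<2*n}}"
    then have sp: "\<sigma> permutes {0..<2*n}" by simp
    show "of_int (sign \<sigma>) * (\<Prod>i<n. Bf ((v(k:=?u)) (\<sigma> (2*i))) ((v(k:=?u)) (\<sigma> (2*i+1))))
       = (\<Sum>j\<in>J. a j * (of_int (sign \<sigma>) * (\<Prod>i<n. Bf ((v(k:=w j)) (\<sigma> (2*i))) ((v(k:=w j)) (\<sigma> (2*i+1))))))"
      by (simp only: per[OF sp] sum_distrib_left) (simp only: mult.left_commute)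
  qed
  also have "\<dots> = (\<Sum>j\<in>J. a j * Fp Bf n (v(k := w j)))"
    unfolding Fp_def by (subst sum.swap) (simp add: sum_distrib_left)
  finally show ?thesis .
qed



locale setting =
  fixes \<rho> :: "int \<Rightarrow> real" and f g :: "real poly"
    and p :: "nat \<Rightarrow> real poly" and h :: "nat \<Rightarrow> real"
  assumes rho_nonneg: "\<And>x. \<rho> x \<ge> 0"
    and moments: "finite_moments \<rho>"
    and deg_f: "degree f \<le> 2" and deg_g: "degree g \<le> 1"
    and pearson: "\<And>x::int. poly f (of_int (x+1)) * \<rho> (x+1) - poly f (of_int x) * \<rho> x
                        = poly g (of_int x) * \<rho> x"
    and monic: "\<And>n. lead_coeff (p n) = 1" and deg_p: "\<And>n. degree (p n) = n"
    and orth: "\<And>m n. ((\<lambda>x::int. poly (p m) (of_int x) * poly (p n) (of_int x) * \<rho> x)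
                      has_sum (if m = n then h n else 0)) UNIV"
    and h_pos: "\<And>n. h n > 0"
begin

definition L :: "real poly \<Rightarrow> real" where
  "L q = (\<Sum>\<^sub>\<infinity>x::int. poly q (of_int x) * \<rho> x)"

lemma summ_pow: "(\<lambda>x::int. (of_int x) ^ k * \<rho> x) summable_on UNIV"
proof -
  have 1: "(\<lambda>x::int. \<bar>real_of_int x\<bar> ^ k * \<rho> x) summable_on UNIV"
    using moments unfolding finite_moments_def by blast
  have 2: "(\<lambda>x::int. 2 * (\<bar>real_of_int x\<bar> ^ k * \<rho> x)) summable_on UNIV"
    using 1 by (rule summable_on_cmult_right)
  have 3: "(\<lambda>x::int. \<bar>real_of_int x\<bar> ^ k * \<rho> x + (of_int x) ^ k * \<rho> x) summable_on UNIV"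
  proof (rule summable_on_comparison_test[OF 2])
    fix x :: int
    have a: "\<bar>(of_int x::real) ^ k\<bar> \<le> \<bar>real_of_int x\<bar> ^ k" by (simp add: power_abs)
    have "- (\<bar>real_of_int x\<bar> ^ k) \<le> (of_int x) ^ k" "(of_int x::real) ^ k \<le> \<bar>real_of_int x\<bar> ^ k"
      using a by linarith+
    then show "\<bar>real_of_int x\<bar> ^ k * \<rho> x + (of_int x) ^ k * \<rho> x \<le> 2 * (\<bar>real_of_int x\<bar> ^ k * \<rho> x)"
      "0 \<le> \<bar>real_of_int x\<bar> ^ k * \<rho> x + (of_int x) ^ k * \<rho> x"
      using mult_right_mono[OF _ rho_nonneg[of x]] 
      by (smt (verit) mult_minus_left)+
  qed
  have "(\<lambda>x::int. (\<bar>real_of_int x\<bar> ^ k * \<rho> x + (of_int x) ^ k * \<rho> x) + - (\<bar>real_of_int x\<bar> ^ k * \<rho> x)) summable_on UNIV"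
    by (rule summable_on_add[OF 3 summable_on_uminus[THEN iffD2, OF 1]])
  then show ?thesis by simp
qed

lemma summ_finsum: "finite I \<Longrightarrow> (\<And>i. i \<in> I \<Longrightarrow> F i summable_on A) \<Longrightarrow>
   (\<lambda>x. \<Sum>i\<in>I. F i x) summable_on (A::'b set)"
  for F :: "'a \<Rightarrow> 'b \<Rightarrow> real"
  by (induction I rule: finite_induct) (auto intro!: summable_on_add)

lemma summ_poly: "(\<lambda>x::int. poly q (of_int x) * \<rho> x) summable_on UNIV"
proof -
  have "(\<lambda>x::int. \<Sum>i\<le>degree q. coeff q i * ((of_int x) ^ i * \<rho> x)) summable_on UNIV"
    by (rule summ_finsum) (auto intro!: summable_on_cmult_right summ_pow)
  moreover have "(\<lambda>x::int. \<Sum>i\<le>degree q. coeff q i * ((of_int x) ^ i * \<rho> x)) = 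
     (\<lambda>x::int. poly q (of_int x) * \<rho> x)"
    by (auto simp: poly_altdef sum_distrib_right mult.assoc)
  ultimately show ?thesis by simp
qed

lemma L_add: "L (a + b) = L a + L b"
  unfolding L_def by (simp add: distrib_right infsum_add summ_poly)

lemma L_smult: "L (smult c a) = c * L a"
  unfolding L_def by (simp add: mult.assoc infsum_cmult_right')

lemma L_minus: "L (- a) = - L a"
  unfolding L_def by (simp add: infsum_uminus)

lemma L_diff: "L (a - b) = L a - L b"
  using L_add[of a "-b"] L_minus[of b] by simp

lemma L_zero[simp]: "L 0 = 0"
  unfolding L_def by simp

lemma L_sum: "finite I \<Longrightarrow> L (\<Sum>i\<in>I. F i) = (\<Sum>i\<in>I. L (F i))"
  by (induction I rule: finite_induct) (simp_all add: L_add)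

lemma L_pp: "L (p m * p n) = (if m = n then h n else 0)"
  unfolding L_def using orth[of m n] by (simp add: has_sum_iff)

definition sh :: "real poly \<Rightarrow> real \<Rightarrow> real poly" where
  "sh q a = pcompose q [:a, 1:]"

lemma poly_sh[simp]: "poly (sh q a) x = poly q (x + a)"
  unfolding sh_def by (simp add: poly_pcompose algebra_simps)

definition Ap :: "real poly \<Rightarrow> real poly" where
  "Ap q = g * sh q 1 + f * (sh q 1 - sh q (-1))"

lemma Al_poly: "Al f g (poly q) y = poly (Ap q) y"
proof -
  have "poly (Ap q) y = poly g y * poly q (y + 1) + poly f y * (poly q (y + 1) - poly q (y - 1))"
    unfolding Ap_def by simp
  then show ?thesis unfolding Al_def by simp
qed

lemma poly_ext: "(\<And>x. poly (a::real poly) x = poly b x) \<Longrightarrow> a = b"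
proof -
  assume "\<And>x. poly a x = poly b x"
  then have "poly a = poly b" by (rule ext)
  then show "a = b" by (simp only: poly_eq_poly_eq_iff)
qed

lemma degree_sh: "degree (sh q a) = degree q"
  unfolding sh_def by (simp add: degree_pcompose)

lemma lead_sh: "lead_coeff (sh q a) = lead_coeff q"
  unfolding sh_def by (subst lead_coeff_comp) auto

lemma deg_drop: "degree (r::real poly) \<le> n \<Longrightarrow> coeff r n = 0 \<Longrightarrow> degree r \<le> n - 1 \<and> (n = 0 \<longrightarrow> r = 0)"
proof -
  assume a: "degree r \<le> n" "coeff r n = 0"
  show ?thesis
  proof (cases "degree r = n")
    case True
    then have "r = 0" using a by (metis leading_coeff_0_iff)
    then show ?thesis by simp
  next
    case False
    then show ?thesis using a by (metis One_nat_def Suc_pred' bot_nat_0.extremum_uniqueI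
        diff_le_self le0 le_neq_implies_less less_Suc_eq_le leading_coeff_0_iff)
  qed
qed

lemma deg_Ap: "degree (Ap q) \<le> degree q + 1"
proof -
  let ?d = "sh q 1 - sh q (-1)"
  have d1: "degree ?d \<le> degree q"
    by (rule degree_diff_le) (simp_all add: degree_sh)
  have d2: "coeff ?d (degree q) = 0"
    using lead_sh[of q 1] lead_sh[of q "-1"] degree_sh[of q] by simp
  have d3: "degree ?d \<le> degree q - 1 \<and> (degree q = 0 \<longrightarrow> ?d = 0)"
    using deg_drop[OF d1 d2] .
  have "degree (g * sh q 1) \<le> degree q + 1"
    using degree_mult_le[of g "sh q 1"] deg_g degree_sh[of q 1] by linarith
  moreover have "degree (f * ?d) \<le> degree q + 1"
  proof (cases "degree q = 0")
    case True then show ?thesis using d3 by simp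
  next
    case False
    then show ?thesis using degree_mult_le[of f ?d] deg_f d3 by linarith
  qed
  ultimately show ?thesis unfolding Ap_def using degree_add_le by blast
qed

lemma bij_shift: "bij_betw (\<lambda>x::int. x + 1) UNIV UNIV"
  by (rule bij_betwI[where g="\<lambda>x. x - 1"]) auto

lemma L_shift: "L ((g + f) * sh q 1) = L (f * q)"
proof -
  have "L ((g + f) * sh q 1) = (\<Sum>\<^sub>\<infinity>x::int. (\<lambda>y::int. poly (f * q) (of_int y) * \<rho> y) (x + 1))"
    unfolding L_def
  proof (rule infsum_cong)
    fix x :: int
    have p: "poly g (of_int x) * \<rho> x + poly f (of_int x) * \<rho> x = poly f (of_int x + 1) * \<rho> (x+1)"
      using pearson[of x] by (simp only: of_int_add of_int_1)
    have "poly ((g + f) * sh q 1) (of_int x) * \<rho> x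
        = (poly g (of_int x) * \<rho> x + poly f (of_int x) * \<rho> x) * poly q (of_int x + 1)"
      by (simp add: ring_distribs mult_ac)
    also have "\<dots> = poly f (of_int x + 1) * \<rho> (x+1) * poly q (of_int x + 1)"
      by (simp only: p)
    also have "\<dots> = poly (f * q) (of_int (x + 1)) * \<rho> (x + 1)"
      by (simp add: mult_ac)
    finally show "poly ((g + f) * sh q 1) (of_int x) * \<rho> x = poly (f * q) (of_int (x + 1)) * \<rho> (x + 1)" .
  qed
  also have "\<dots> = L (f * q)"
    unfolding L_def by (rule infsum_reindex_bij_betw[OF bij_shift])
  finally show ?thesis .
qed

definition B :: "real poly \<Rightarrow> real poly \<Rightarrow> real" where
  "B u w = L (f * (sh u (-1) * w - u * sh w (-1)))"

lemma L_A: "L (Ap u * w) = - B u w"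
proof -
  have "Ap u * w = (g + f) * sh (u * sh w (-1)) 1 - f * (sh u (-1) * w)"
    by (rule poly_ext) (simp add: Ap_def algebra_simps)
  then have "L (Ap u * w) = L (f * (u * sh w (-1))) - L (f * (sh u (-1) * w))"
    by (simp add: L_diff L_shift)
  also have "\<dots> = - B u w"
    unfolding B_def
    by (simp add: right_diff_distrib L_diff)
  finally show ?thesis .
qed

lemma B_anti: "B w u = - B u w"
proof -
  have "f * (sh w (-1) * u - w * sh u (-1)) = - (f * (sh u (-1) * w - u * sh w (-1)))"
    by (rule poly_ext) (simp add: algebra_simps)
  then show ?thesis unfolding B_def by (simp only: L_minus)
qed

lemma skew: "L (Ap u * w) = - L (Ap w * u)"
  unfolding L_A using B_anti[of w u] by simp

lemma B_sum_left: "finite J \<Longrightarrow> B (\<Sum>j\<in>J. smult (a j) (u j)) z = (\<Sum>j\<in>J. a j * B (u j) z)"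
proof -
  assume J: "finite J"
  have "f * (sh (\<Sum>j\<in>J. smult (a j) (u j)) (-1) * z - (\<Sum>j\<in>J. smult (a j) (u j)) * sh z (-1))
      = (\<Sum>j\<in>J. smult (a j) (f * (sh (u j) (-1) * z - u j * sh z (-1))))"
    by (rule poly_ext) (simp add: poly_sum sum_distrib_left sum_distrib_right sum_subtractf[symmetric] algebra_simps)
  then show ?thesis unfolding B_def using J by (simp add: L_sum L_smult)
qed

lemma B_sum_right: "finite J \<Longrightarrow> B z (\<Sum>j\<in>J. smult (a j) (u j)) = (\<Sum>j\<in>J. a j * B z (u j))"
proof -
  assume J: "finite J"
  have e: "\<And>j. B (u j) z = - B z (u j)" by (rule B_anti)
  have "B z (\<Sum>j\<in>J. smult (a j) (u j)) = - B (\<Sum>j\<in>J. smult (a j) (u j)) z" by (rule B_anti)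
  also have "\<dots> = - (\<Sum>j\<in>J. a j * B (u j) z)" using B_sum_left[OF J] by simp
  also have "\<dots> = (\<Sum>j\<in>J. a j * B z (u j))" by (simp add: e sum_negf[symmetric])
  finally show ?thesis .
qed

lemma L_sum_smult: "finite J \<Longrightarrow> L ((\<Sum>j\<in>J. smult (a j) (u j)) * z) = (\<Sum>j\<in>J. a j * L (u j * z))"
  by (simp add: sum_distrib_right L_sum L_smult)


lemma p0: "p 0 = 1"
proof -
  have "degree (p 0) = 0" by (rule deg_p)
  then have "p 0 = [:coeff (p 0) 0:]" by (metis degree_0_id)
  moreover have "coeff (p 0) 0 = 1" using monic[of 0] deg_p[of 0] by simp
  ultimately show ?thesis by (simp add: one_pCons)
qed

lemma span: "degree q \<le> m \<Longrightarrow> \<exists>a. q = (\<Sum>j\<le>m. smult (a j) (p j))"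
proof (induction m arbitrary: q)
  case 0
  then obtain c0 where qc: "q = [:c0:]" by (metis degree_0_id le_zero_eq)
  have "(\<Sum>j\<le>0. smult ((\<lambda>_. c0) j) (p j)) = q" unfolding qc by (simp add: p0 smult_one)
  then show ?case by (intro exI[of _ "\<lambda>_. c0"]) (rule sym)
next
  case (Suc m)
  define q' where "q' = q - smult (coeff q (Suc m)) (p (Suc m))"
  have d1: "degree q' \<le> Suc m" unfolding q'_def
    using Suc.prems deg_p[of "Suc m"] by (intro degree_diff_le) auto
  have c1: "coeff (p (Suc m)) (Suc m) = 1" using monic[of "Suc m"] deg_p[of "Suc m"] by simp
  have d2: "coeff q' (Suc m) = 0" unfolding q'_def using c1 by simp
  have "degree q' \<le> m" using deg_drop[OF d1 d2] by simp
  then obtain a where a: "q' = (\<Sum>j\<le>m. smult (a j) (p j))" using Suc.IH by blast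
  define a' where "a' = a(Suc m := coeff q (Suc m))"
  have "(\<Sum>j\<le>Suc m. smult (a' j) (p j)) = (\<Sum>j\<le>m. smult (a' j) (p j)) + smult (coeff q (Suc m)) (p (Suc m))"
    by (simp add: a'_def)
  also have "(\<Sum>j\<le>m. smult (a' j) (p j)) = (\<Sum>j\<le>m. smult (a j) (p j))"
    by (rule sum.cong) (auto simp: a'_def)
  finally have "(\<Sum>j\<le>Suc m. smult (a' j) (p j)) = q" using a unfolding q'_def by simp
  then show ?case by (intro exI[of _ a']) (rule sym)
qed

lemma orth_low: "degree r < n \<Longrightarrow> L (p n * r) = 0"
proof -
  assume d: "degree r < n"
  obtain a where a: "r = (\<Sum>j\<le>degree r. smult (a j) (p j))" using span[of r "degree r"] by blast
  have "L (p n * r) = L (r * p n)" by (simp add: mult.commute)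
  also have "\<dots> = (\<Sum>j\<le>degree r. a j * L (p j * p n))" by (subst a) (simp add: L_sum_smult)
  also have "\<dots> = 0" using d by (intro sum.neutral) (auto simp: L_pp)
  finally show ?thesis .
qed

lemma zero_crit: "degree r \<le> m \<Longrightarrow> (\<And>k. k \<le> m \<Longrightarrow> L (r * p k) = 0) \<Longrightarrow> r = 0"
proof -
  assume d: "degree r \<le> m" and z: "\<And>k. k \<le> m \<Longrightarrow> L (r * p k) = 0"
  obtain a where a: "r = (\<Sum>j\<le>m. smult (a j) (p j))" using span[OF d] by blast
  have ak: "a k = 0" if k: "k \<le> m" for k
  proof -
    have "L (r * p k) = (\<Sum>j\<le>m. a j * L (p j * p k))" by (subst a) (simp add: L_sum_smult)
    also have "\<dots> = (\<Sum>j\<in>{k}. a j * L (p j * p k))"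
      using k by (intro sum.mono_neutral_right) (auto simp: L_pp)
    also have "\<dots> = a k * h k" by (simp add: L_pp)
    finally have "a k * h k = 0" using z[OF k] by simp
    then show ?thesis using h_pos[of k] by simp
  qed
  show "r = 0" by (subst a) (simp add: ak)
qed

definition c :: "nat \<Rightarrow> real" where
  "c n = - L (p (n+1) * Ap (p n))"

lemma LAp: "L (Ap (p n) * p k) = (if k = n + 1 then - c n else if k + 1 = n then c k else 0)"
proof -
  consider "k = n + 1" | "k = n" | "k + 1 = n" | "k + 1 < n" | "k > n + 1" by linarith
  then show ?thesis
  proof cases
    case 1 then show ?thesis unfolding c_def by (simp add: mult.commute)
  next
    case 2
    have "L (Ap (p n) * p n) = - L (Ap (p n) * p n)" by (rule skew)
    then show ?thesis using 2 by simp
  next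
    case 3
    have "L (Ap (p n) * p k) = - L (Ap (p k) * p n)" by (rule skew)
    also have "\<dots> = c k" unfolding c_def using 3 by (simp add: mult.commute)
    finally show ?thesis using 3 by simp
  next
    case 4
    have "L (Ap (p n) * p k) = - L (Ap (p k) * p n)" by (rule skew)
    also have "L (Ap (p k) * p n) = L (p n * Ap (p k))" by (simp add: mult.commute)
    also have "\<dots> = 0" using deg_Ap[of "p k"] deg_p[of k] 4 by (intro orth_low) simp
    finally show ?thesis using 4 by simp
  next
    case 5
    have "L (Ap (p n) * p k) = L (p k * Ap (p n))" by (simp add: mult.commute)
    also have "\<dots> = 0" using deg_Ap[of "p n"] deg_p[of n] 5 by (intro orth_low) simp
    finally show ?thesis using 5 by simp
  qed
qed

lemma recur: "Ap (p n) = smult (- (c n / h (n+1))) (p (n+1))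
    + smult (if n = 0 then 0 else c (n-1) / h (n-1)) (p (n-1))"
proof -
  define \<alpha> where "\<alpha> = - (c n / h (n+1))"
  define \<beta> where "\<beta> = (if n = 0 then 0 else c (n-1) / h (n-1))"
  define r where "r = Ap (p n) - smult \<alpha> (p (n+1)) - smult \<beta> (p (n-1))"
  have dr: "degree r \<le> n + 1" unfolding r_def
    using deg_Ap[of "p n"] deg_p[of n] deg_p[of "n+1"] deg_p[of "n-1"]
    by (intro degree_diff_le) (auto intro: order.trans[OF degree_smult_le])
  have "r = 0"
  proof (rule zero_crit[OF dr])
    fix k assume k: "k \<le> n + 1"
    have "r * p k = Ap (p n) * p k - smult \<alpha> (p (n+1) * p k) - smult \<beta> (p (n-1) * p k)"
      unfolding r_def by (simp add: left_diff_distrib)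
    then have "L (r * p k) = L (Ap (p n) * p k) - \<alpha> * L (p (n+1) * p k) - \<beta> * L (p (n-1) * p k)"
      by (simp add: L_diff L_smult)
    also have "\<dots> = 0"
      unfolding LAp L_pp \<alpha>_def \<beta>_def using h_pos[of "n+1"] h_pos[of "n-1"] k
      by (auto simp: field_simps)
    finally show "L (r * p k) = 0" .
  qed
  then show ?thesis unfolding r_def \<alpha>_def \<beta>_def by (simp add: algebra_simps)
qed


end


context setting begin

lemma M_eq: "(\<lambda>i j. \<Sum>\<^sub>\<infinity>x::int.
                 (of_int x ^ i * (of_int x + 1) ^ j - (of_int x + 1) ^ i * of_int x ^ j)
                 * (poly f (of_int (x+1)) * \<rho> (x+1))) = (\<lambda>i j. B (monom 1 i) (monom 1 j))"
proof (intro ext)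
  fix i j :: nat
  let ?G = "\<lambda>y::int. poly (f * (sh (monom 1 i) (-1) * monom 1 j - monom 1 i * sh (monom 1 j) (-1))) (of_int y) * \<rho> y"
  have "(\<Sum>\<^sub>\<infinity>x::int. (of_int x ^ i * (of_int x + 1) ^ j - (of_int x + 1) ^ i * of_int x ^ j)
                 * (poly f (of_int (x+1)) * \<rho> (x+1))) = (\<Sum>\<^sub>\<infinity>x::int. ?G (x + 1))"
    by (rule infsum_cong) (simp add: poly_monom mult_ac)
  also have "\<dots> = B (monom 1 i) (monom 1 j)"
    unfolding B_def L_def by (rule infsum_reindex_bij_betw[OF bij_shift])
  finally show "(\<Sum>\<^sub>\<infinity>x::int. (of_int x ^ i * (of_int x + 1) ^ j - (of_int x + 1) ^ i * of_int x ^ j)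
                 * (poly f (of_int (x+1)) * \<rho> (x+1))) = B (monom 1 i) (monom 1 j)" .
qed

lemma c_even_nz:
  assumes pf: "pfaffian (Suc l) (\<lambda>i j. \<Sum>\<^sub>\<infinity>x::int.
                 (of_int x ^ i * (of_int x + 1) ^ j - (of_int x + 1) ^ i * of_int x ^ j)
                 * (poly f (of_int (x+1)) * \<rho> (x+1))) \<noteq> 0"
  shows "c (2*l) \<noteq> 0"
proof
  assume c0: "c (2*l) = 0"
  define n where "n = Suc l"
  define k where "k = 2*l+1"
  define v where "v = (\<lambda>i::nat. monom (1::real) i)"
  define q where "q = p k"
  have k2: "k < 2*n" unfolding k_def n_def by simp
  have "Fp B n v / (2 ^ n * fact n) \<noteq> 0"
    using pf unfolding M_eq pfaffian_def Fp_def v_def n_def by simp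
  then have F0: "Fp B n v \<noteq> 0" by simp
  have qexp: "q = (\<Sum>j\<in>{..k}. smult (coeff q j) (v j))"
  proof -
    have "q = (\<Sum>i\<le>degree q. monom (coeff q i) i)" by (rule poly_as_sum_of_monoms[symmetric])
    also have "degree q = k" unfolding q_def by (rule deg_p)
    finally show ?thesis unfolding v_def by (simp add: smult_monom)
  qed
  have "Fp B n (v(k := q)) = (\<Sum>j\<in>{..k}. coeff q j * Fp B n (v(k := v j)))"
    by (subst qexp, rule Fp_slot_lin[OF k2]) (simp_all add: B_sum_left B_sum_right)
  also have "\<dots> = (\<Sum>j\<in>{k}. coeff q j * Fp B n (v(k := v j)))"
  proof (rule sum.mono_neutral_right)
    show "\<forall>j\<in>{..k} - {k}. coeff q j * Fp B n (v(k := v j)) = 0"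
    proof
      fix j assume j: "j \<in> {..k} - {k}"
      have "Fp B n (v(k := v j)) = 0"
        by (rule Fp_alt[of j n k]) (use j k2 in auto)
      then show "coeff q j * Fp B n (v(k := v j)) = 0" by simp
    qed
  qed auto
  also have "\<dots> = Fp B n v"
    using monic[of k] deg_p[of k] unfolding q_def by simp
  finally have F1: "Fp B n (v(k := q)) = Fp B n v" .
  \<comment> \<open>q is in the radical\<close>
  have Bqp: "B q (p m) = 0" if m: "m \<le> 2*l" for m
  proof -
    have "B q (p m) = - L (Ap q * p m)" using L_A[of q "p m"] by simp
    also have "\<dots> = 0" unfolding q_def LAp using m c0 k_def by auto
    finally show ?thesis .
  qed
  have Bqv: "B q (v j) = 0" if j: "j \<le> 2*l" for j
  proof -
    obtain a where a: "v j = (\<Sum>m\<le>j. smult (a m) (p m))"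
      using span[of "v j" j] unfolding v_def by (auto simp: degree_monom_eq)
    have "B q (v j) = (\<Sum>m\<le>j. a m * B q (p m))" by (subst a) (simp add: B_sum_right)
    also have "\<dots> = 0" using j Bqp by (intro sum.neutral) auto
    finally show ?thesis .
  qed
  have "Fp B n (v(k := q)) = 0"
  proof (rule Fp_zero_slot[OF k2])
    fix j assume "j < 2*n" "j \<noteq> k"
    then have j: "j \<le> 2*l" unfolding n_def k_def by simp
    show "B q (v j) = 0 \<and> B (v j) q = 0" using Bqv[OF j] B_anti[of "v j" q] by simp
  qed
  then show False using F0 F1 by simp
qed

end


lemma Al_add: "Al f g (\<lambda>y. \<phi> y + \<psi> y) z = Al f g \<phi> z + Al f g \<psi> z"
  unfolding Al_def by (simp add: algebra_simps)

lemma Al_sum: "finite I \<Longrightarrow> Al f g (\<lambda>y. \<Sum>i\<in>I. \<phi> i y) z = (\<Sum>i\<in>I. Al f g (\<phi> i) z)"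
proof (induction I rule: finite_induct)
  case empty then show ?case by (simp add: Al_def)
next
  case (insert a I)
  then show ?case by (simp add: Al_add)
qed

lemma Al_lin: "Al f g (\<lambda>y. a * \<phi> y - b * \<psi> y) z = a * Al f g \<phi> z - b * Al f g \<psi> z"
  unfolding Al_def by (simp add: algebra_simps)

lemma telescope:
  fixes Px Py Qx c h :: "nat \<Rightarrow> real"
  assumes Q0: "Qx 0 = Px 0"
    and Qrec: "\<And>i. Qx (Suc i) = Px (2*i+2) + c (2*i+1) / c (2*i) * Qx i"
    and cnz: "\<And>i. i \<le> M \<Longrightarrow> c (2*i) \<noteq> 0"
    and hnz: "\<And>k. h k \<noteq> 0"
  shows "(\<Sum>i<Suc M. (1 / c (2*i)) * (Qx i * (- (c (2*i+1) / h (2*i+2)) * Py (2*i+2) + c (2*i) / h (2*i) * Py (2*i))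
            + c (2*i) / h (2*i+1) * Py (2*i+1) * Px (2*i+1)))
     = (\<Sum>m<Suc M. Px (2*m) * Py (2*m) / h (2*m)) + (\<Sum>m<Suc M. Px (2*m+1) * Py (2*m+1) / h (2*m+1))
       - (c (2*M+1) / c (2*M)) / h (2*M+2) * Py (2*M+2) * Qx M"
  using cnz
proof (induction M)
  case 0
  have "c 0 \<noteq> 0" using 0[of 0] by simp
  then show ?case using Q0 hnz by (simp add: field_simps)
next
  case (Suc M)
  have c1: "c (2*Suc M) \<noteq> 0" using Suc.prems[of "Suc M"] by simp
  have c2: "c (2*M) \<noteq> 0" using Suc.prems[of M] by simp
  have IH: "(\<Sum>i<Suc M. (1 / c (2*i)) * (Qx i * (- (c (2*i+1) / h (2*i+2)) * Py (2*i+2) + c (2*i) / h (2*i) * Py (2*i))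
            + c (2*i) / h (2*i+1) * Py (2*i+1) * Px (2*i+1)))
     = (\<Sum>m<Suc M. Px (2*m) * Py (2*m) / h (2*m)) + (\<Sum>m<Suc M. Px (2*m+1) * Py (2*m+1) / h (2*m+1))
       - (c (2*M+1) / c (2*M)) / h (2*M+2) * Py (2*M+2) * Qx M"
    using Suc.IH Suc.prems by simp
  show ?case
    apply (subst sum.lessThan_Suc)
    apply (subst IH)
    apply (simp only: sum.lessThan_Suc[of _ "Suc M"] Qrec)
    using c1 c2 hnz by (simp add: field_simps)
qed

context setting begin

lemma cc_eq: "cc f g \<rho> p n = c n"
  unfolding cc_def c_def L_def by (simp add: Al_poly mult.assoc)

lemma QQ_odd: "QQ f g \<rho> p (2*i+1) = p (2*i+1)"
  unfolding QQ_def by simp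

lemma QQ_0: "QQ f g \<rho> p 0 = p 0"
  unfolding QQ_def by simp

lemma QQ_rec: "poly (QQ f g \<rho> p (2 * Suc i)) z = poly (p (2*i+2)) z + c (2*i+1) / c (2*i) * poly (QQ f g \<rho> p (2*i)) z"
proof -
  let ?r = "\<lambda>j. cc f g \<rho> p (2*j+1) / cc f g \<rho> p (2*j)"
  have "poly (QQ f g \<rho> p (2 * Suc i)) z = (\<Sum>l = 0..Suc i. (\<Prod>j = l..<Suc i. ?r j) * poly (p (2*l)) z)"
    unfolding QQ_def by (simp add: poly_sum)
  also have "\<dots> = (\<Sum>l = 0..i. (\<Prod>j = l..<Suc i. ?r j) * poly (p (2*l)) z) + poly (p (2*i+2)) z"
    by (simp add: sum.atLeast0_atMost_Suc)
  also have "(\<Sum>l = 0..i. (\<Prod>j = l..<Suc i. ?r j) * poly (p (2*l)) z)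
      = ?r i * (\<Sum>l = 0..i. (\<Prod>j = l..<i. ?r j) * poly (p (2*l)) z)"
    unfolding sum_distrib_left
    by (rule sum.cong) (auto simp: prod.atLeastLessThan_Suc)
  also have "(\<Sum>l = 0..i. (\<Prod>j = l..<i. ?r j) * poly (p (2*l)) z) = poly (QQ f g \<rho> p (2*i)) z"
    unfolding QQ_def by (simp add: poly_sum)
  finally show ?thesis by (simp add: cc_eq)
qed

lemma Ap_p: "poly (Ap (p n)) y = - (c n / h (n+1)) * poly (p (n+1)) y
    + (if n = 0 then 0 else c (n-1) / h (n-1)) * poly (p (n-1)) y"
  by (subst recur) simp

lemma Ap_lin: "(\<And>z. poly q z = poly a z + r * poly b z) \<Longrightarrow> poly (Ap q) y = poly (Ap a) y + r * poly (Ap b) y"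
  unfolding Ap_def by (simp add: algebra_simps)

lemma AQ: "(\<And>j. j < i \<Longrightarrow> c (2*j) \<noteq> 0) \<Longrightarrow>
   poly (Ap (QQ f g \<rho> p (2*i))) y = - (c (2*i) / h (2*i+1)) * poly (p (2*i+1)) y"
proof (induction i arbitrary: y)
  case 0 then show ?case by (simp add: QQ_0 Ap_p)
next
  case (Suc i)
  have ci: "c (2*i) \<noteq> 0" using Suc.prems[of i] by simp
  have "poly (Ap (QQ f g \<rho> p (2 * Suc i))) y = poly (Ap (p (2*i+2))) y + c (2*i+1) / c (2*i) * poly (Ap (QQ f g \<rho> p (2*i))) y"
    by (rule Ap_lin) (rule QQ_rec)
  also have "\<dots> = - (c (2*Suc i) / h (2*Suc i+1)) * poly (p (2*Suc i+1)) y"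
    using Suc.IH[of y] Suc.prems ci by (simp add: Ap_p field_simps)
  finally show ?case .
qed

end


context setting begin

lemma main_loc:
  assumes pfaff: "\<And>n. n \<ge> 1 \<Longrightarrow> pfaffian n (\<lambda>i j. \<Sum>\<^sub>\<infinity>x::int.
                 (of_int x ^ i * (of_int x + 1) ^ j - (of_int x + 1) ^ i * of_int x ^ j)
                 * (poly f (of_int (x+1)) * \<rho> (x+1))) \<noteq> 0"
    and N: "N \<ge> 1"
  shows "\<forall>x y::real.
     (\<Sum>m<N. poly (p (2*m)) x * poly (p (2*m)) y / h (2*m))
     + (\<Sum>m<N. poly (p (2*m+1)) x * poly (p (2*m+1)) y / h (2*m+1))
     = Al f g (\<lambda>y'. SS f g \<rho> p N x y') y
       - ((- cc f g \<rho> p (2*N-1) / cc f g \<rho> p (2*N-2)) / h (2*N))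
         * poly (p (2*N)) y * poly (QQ f g \<rho> p (2*N-2)) x"
proof (intro allI)
  fix x y :: real
  obtain M where NM: "N = Suc M" using N by (cases N) auto
  have cnz: "c (2*i) \<noteq> 0" for i
    using c_even_nz[of i] pfaff[of "Suc i"] by simp
  have hnz: "h k \<noteq> 0" for k using h_pos[of k] by simp
  define Qx where "Qx i = poly (QQ f g \<rho> p (2*i)) x" for i
  define Px where "Px k = poly (p k) x" for k
  define Py where "Py k = poly (p k) y" for k
  have SSeq: "(\<lambda>y'. SS f g \<rho> p N x y') = (\<lambda>y'. \<Sum>i<N. (1 / c (2*i) * Qx i) * poly (p (2*i+1)) y'
        - (1 / c (2*i) * Px (2*i+1)) * poly (QQ f g \<rho> p (2*i)) y')"
    unfolding SS_def QQ_odd cc_eq by (intro ext sum.cong refl) (simp add: Qx_def Px_def algebra_simps)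
  have AS: "Al f g (\<lambda>y'. SS f g \<rho> p N x y') y
     = (\<Sum>i<N. (1 / c (2*i)) * (Qx i * (- (c (2*i+1) / h (2*i+2)) * Py (2*i+2) + c (2*i) / h (2*i) * Py (2*i))
            + c (2*i) / h (2*i+1) * Py (2*i+1) * Px (2*i+1)))"
    unfolding SSeq Al_sum[OF finite_lessThan] Al_lin Al_poly
  proof (rule sum.cong[OF refl])
    fix i
    have e1: "poly (Ap (p (2*i+1))) y = - (c (2*i+1) / h (2*i+2)) * Py (2*i+2) + c (2*i) / h (2*i) * Py (2*i)"
      unfolding Py_def by (simp add: Ap_p)
    have e2: "poly (Ap (QQ f g \<rho> p (2*i))) y = - (c (2*i) / h (2*i+1)) * Py (2*i+1)"
      unfolding Py_def using cnz by (intro AQ) auto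
    show "1 / c (2*i) * Qx i * poly (Ap (p (2*i+1))) y - 1 / c (2*i) * Px (2*i+1) * poly (Ap (QQ f g \<rho> p (2*i))) y
      = (1 / c (2*i)) * (Qx i * (- (c (2*i+1) / h (2*i+2)) * Py (2*i+2) + c (2*i) / h (2*i) * Py (2*i))
            + c (2*i) / h (2*i+1) * Py (2*i+1) * Px (2*i+1))"
      unfolding e1 e2 by (simp add: algebra_simps)
  qed
  have T: "(\<Sum>i<Suc M. (1 / c (2*i)) * (Qx i * (- (c (2*i+1) / h (2*i+2)) * Py (2*i+2) + c (2*i) / h (2*i) * Py (2*i))
            + c (2*i) / h (2*i+1) * Py (2*i+1) * Px (2*i+1)))
     = (\<Sum>m<Suc M. Px (2*m) * Py (2*m) / h (2*m)) + (\<Sum>m<Suc M. Px (2*m+1) * Py (2*m+1) / h (2*m+1))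
       - (c (2*M+1) / c (2*M)) / h (2*M+2) * Py (2*M+2) * Qx M"
  proof (rule telescope)
    show "Qx 0 = Px 0" unfolding Qx_def Px_def by (simp add: QQ_0)
    show "Qx (Suc i) = Px (2*i+2) + c (2*i+1) / c (2*i) * Qx i" for i
      unfolding Qx_def Px_def by (rule QQ_rec)
  qed (use cnz hnz in auto)
  have n1: "2*N-1 = 2*M+1" "2*N-2 = 2*M" "2*N = 2*M+2" using NM by auto
  show "(\<Sum>m<N. poly (p (2*m)) x * poly (p (2*m)) y / h (2*m))
     + (\<Sum>m<N. poly (p (2*m+1)) x * poly (p (2*m+1)) y / h (2*m+1))
     = Al f g (\<lambda>y'. SS f g \<rho> p N x y') y
       - ((- cc f g \<rho> p (2*N-1) / cc f g \<rho> p (2*N-2)) / h (2*N))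
         * poly (p (2*N)) y * poly (QQ f g \<rho> p (2*N-2)) x"
    unfolding AS n1 cc_eq using T unfolding NM Px_def Py_def Qx_def by simp
qed

end

theorem mainTheorem5:
  fixes \<rho> :: "int \<Rightarrow> real" and f g :: "real poly"
    and p :: "nat \<Rightarrow> real poly" and h :: "nat \<Rightarrow> real" and N :: nat
  assumes rho_nonneg: "\<And>x. \<rho> x \<ge> 0"
    and moments: "finite_moments \<rho>"
    and deg_f: "degree f \<le> 2" and deg_g: "degree g \<le> 1"
    and pearson: "\<And>x::int. poly f (of_int (x+1)) * \<rho> (x+1) - poly f (of_int x) * \<rho> x
                        = poly g (of_int x) * \<rho> x"
    and boundary: "vanishes_at_endpoints \<rho> f"
    and monic: "\<And>n. lead_coeff (p n) = 1" and deg_p: "\<And>n. degree (p n) = n"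
    and orth: "\<And>m n. ((\<lambda>x::int. poly (p m) (of_int x) * poly (p n) (of_int x) * \<rho> x)
                      has_sum (if m = n then h n else 0)) UNIV"
    and h_pos: "\<And>n. h n > 0"
    and pfaff: "\<And>n. n \<ge> 1 \<Longrightarrow> pfaffian n (\<lambda>i j. \<Sum>\<^sub>\<infinity>x::int.
                 (of_int x ^ i * (of_int x + 1) ^ j - (of_int x + 1) ^ i * of_int x ^ j)
                 * (poly f (of_int (x+1)) * \<rho> (x+1))) \<noteq> 0"
    and N: "N \<ge> 1"
  shows "\<forall>x y::real.
     (\<Sum>m<N. poly (p (2*m)) x * poly (p (2*m)) y / h (2*m))
     + (\<Sum>m<N. poly (p (2*m+1)) x * poly (p (2*m+1)) y / h (2*m+1))
     = Al f g (\<lambda>y'. SS f g \<rho> p N x y') y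
       - ((- cc f g \<rho> p (2*N-1) / cc f g \<rho> p (2*N-2)) / h (2*N))
         * poly (p (2*N)) y * poly (QQ f g \<rho> p (2*N-2)) x"
  by (rule setting.main_loc[OF setting.intro[OF rho_nonneg moments deg_f deg_g pearson monic deg_p orth h_pos] pfaff N])

end
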